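(* Let $A$ and $B$ be $3$-dimensional boxes with closed side lengths $a_1\le a_2\le a_3$ and $b_1\le b_2\le b_3$, such that both the arrangement with $A$ inside $B$ and the arrangement with $B$ inside $A$ are possible, and suppose $a_1\le b_1$. Then the side lengths satisfy one of the following four chains, where in each chain no two adjacent inequalities are both equalities: Type 1: $a_1\le b_1<a_2\le b_2<a_3\le b_3$; Type 2: $a_1\le b_1<a_2\le b_2\le b_3<a_3$; Type 3: $a_1\le b_1\le b_2<a_2\le a_3\le b_3$; Type 4: $a_1\le b_1\le b_2<a_2<b_3<a_3$.
   Context: A $3$-dimensional box $A$ has closed side lengths $a_1\le a_2\le a_3$ (positive reals). A state of $A$ is either closed or expanded along one side $i$: $a_i$ is replaced by $a_i'$ with $a_i\le a_i'\le 2a_i$, other sides unchanged (only one side can expand). The dimension vector of a state is its side lengths sorted non-decreasingly. A box in some state fits inside another box in some state if each coordinate of the outer one's dimension vector is strictly larger than the corresponding coordinate of the inner one's. The arrangement "$X$ inside $Y$" is possible if $X$ and $Y$ can be given states so that $X$ fits inside $Y$. *)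

theory Defs
  imports Main "HOL.Real"
begin

text \<open>A 3-dimensional box is given by its list of closed side lengths (length 3).
  A state is either closed, or expanded along exactly one side i,
  replacing the i-th side a_i by some a_i' with a_i \<le> a_i' \<le> 2 a_i.\<close>

definition box_states :: "real list \<Rightarrow> real list set" where
  "box_states a = {a} \<union> {a[i := t] | i t. i < length a \<and> a ! i \<le> t \<and> t \<le> 2 * (a ! i)}"

definition dim_vec :: "real list \<Rightarrow> real list" where
  "dim_vec s = sort s"

definition fits_in :: "real list \<Rightarrow> real list \<Rightarrow> bool" where
  "fits_in u v \<longleftrightarrow> length u = length v \<and> (\<forall>i < length u. u ! i < v ! i)"

definition inside_possible :: "real list \<Rightarrow> real list \<Rightarrow> bool" where
  "inside_possible X Y \<longleftrightarrow>
     (\<exists>sX \<in> box_states X. \<exists>sY \<in> box_states Y. fits_in (dim_vec sX) (dim_vec sY))"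

end

theory Submission
  imports Defs
begin

lemma states3:
  "s \<in> box_states [x1,x2,x3::real] \<longleftrightarrow> s = [x1,x2,x3]
    \<or> (\<exists>t. x1 \<le> t \<and> t \<le> 2*x1 \<and> s = [t,x2,x3])
    \<or> (\<exists>t. x2 \<le> t \<and> t \<le> 2*x2 \<and> s = [x1,t,x3])
    \<or> (\<exists>t. x3 \<le> t \<and> t \<le> 2*x3 \<and> s = [x1,x2,t])"
proof -
  have "(\<exists>i t. s = [x1,x2,x3][i := t] \<and> i < 3 \<and> [x1,x2,x3] ! i \<le> t \<and> t \<le> 2 * ([x1,x2,x3] ! i))
     \<longleftrightarrow> (\<exists>t. x1 \<le> t \<and> t \<le> 2*x1 \<and> s = [t,x2,x3])
    \<or> (\<exists>t. x2 \<le> t \<and> t \<le> 2*x2 \<and> s = [x1,t,x3])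
    \<or> (\<exists>t. x3 \<le> t \<and> t \<le> 2*x3 \<and> s = [x1,x2,t])" (is "?L = ?R")
  proof
    assume ?L
    then obtain i t where h: "s = [x1,x2,x3][i := t]" "i < 3" "[x1,x2,x3] ! i \<le> t" "t \<le> 2 * ([x1,x2,x3] ! i)" by blast
    then have "i = 0 \<or> i = 1 \<or> i = 2" by auto
    then show ?R using h by auto
  next
    assume ?R
    then show ?L
    proof (elim disjE exE conjE)
      fix t assume "x1 \<le> t" "t \<le> 2*x1" "s = [t,x2,x3]"
      then show ?L by (intro exI[of _ 0] exI[of _ t]) auto
    next
      fix t assume "x2 \<le> t" "t \<le> 2*x2" "s = [x1,t,x3]"
      then show ?L by (intro exI[of _ 1] exI[of _ t]) auto
    next
      fix t assume "x3 \<le> t" "t \<le> 2*x3" "s = [x1,x2,t]"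
      then show ?L by (intro exI[of _ 2] exI[of _ t]) (auto simp: numeral_2_eq_2)
    qed
  qed
  then show ?thesis unfolding box_states_def by auto
qed

lemma dim3: "\<exists>p q r. dim_vec [x,y,z::real] = [p,q,r] \<and>
   {p,q,r} \<subseteq> {x,y,z} \<and> p \<le> q \<and> q \<le> r \<and>
   ((p = x \<and> ((q = y \<and> r = z) \<or> (q = z \<and> r = y))) \<or>
    (p = y \<and> ((q = x \<and> r = z) \<or> (q = z \<and> r = x))) \<or>
    (p = z \<and> ((q = x \<and> r = y) \<or> (q = y \<and> r = x))))"
  unfolding dim_vec_def by (auto split: if_splits)

lemma lowstate:
  assumes "s \<in> box_states [x1,x2,x3::real]" "x1 \<le> x2" "x2 \<le> x3"
  shows "\<exists>p q r. dim_vec s = [p,q,r] \<and> x1 \<le> p \<and> x2 \<le> q"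
  using assms unfolding states3
  apply (elim disjE exE conjE)
  subgoal using dim3[of x1 x2 x3] by auto
  subgoal for t using dim3[of t x2 x3] by auto
  subgoal for t using dim3[of x1 t x3] by auto
  subgoal for t using dim3[of x1 x2 t] by auto
  done

lemma highstate:
  assumes "s \<in> box_states [x1,x2,x3::real]" "x1 \<le> x2" "x2 \<le> x3"
  shows "\<exists>p q r. dim_vec s = [p,q,r] \<and> p \<le> x2 \<and> q \<le> x3"
  using assms unfolding states3
  apply (elim disjE exE conjE)
  subgoal using dim3[of x1 x2 x3] by auto
  subgoal for t using dim3[of t x2 x3] by auto
  subgoal for t using dim3[of x1 t x3] by auto
  subgoal for t using dim3[of x1 x2 t] by auto
  done

lemma inside_nec:
  assumes "inside_possible [x1,x2,x3::real] [y1,y2,y3]"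
    "x1 \<le> x2" "x2 \<le> x3" "y1 \<le> y2" "y2 \<le> y3"
  shows "x1 < y2 \<and> x2 < y3"
proof -
  obtain sX sY where s: "sX \<in> box_states [x1,x2,x3]" "sY \<in> box_states [y1,y2,y3]"
    "fits_in (dim_vec sX) (dim_vec sY)"
    using assms(1) unfolding inside_possible_def by blast
  obtain p q r where 1: "dim_vec sX = [p,q,r]" "x1 \<le> p" "x2 \<le> q"
    using lowstate[OF s(1) assms(2,3)] by blast
  obtain p' q' r' where 2: "dim_vec sY = [p',q',r']" "p' \<le> y2" "q' \<le> y3"
    using highstate[OF s(2) assms(4,5)] by blast
  have f: "\<forall>i<3. [p,q,r] ! i < [p',q',r'] ! i" using s(3) 1 2 unfolding fits_in_def by simp
  have "p < p'" using f[rule_format, of 0] by simp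
  moreover have "q < q'" using f[rule_format, of 1] by simp
  ultimately show ?thesis using 1 2 by auto
qed

theorem theorem29:
  fixes a1 a2 a3 b1 b2 b3 :: real
  assumes "0 < a1" "a1 \<le> a2" "a2 \<le> a3"
    and "0 < b1" "b1 \<le> b2" "b2 \<le> b3"
    and "inside_possible [a1, a2, a3] [b1, b2, b3]"
    and "inside_possible [b1, b2, b3] [a1, a2, a3]"
    and "a1 \<le> b1"
  shows "(a1 \<le> b1 \<and> b1 < a2 \<and> a2 \<le> b2 \<and> b2 < a3 \<and> a3 \<le> b3)
       \<or> (a1 \<le> b1 \<and> b1 < a2 \<and> a2 \<le> b2 \<and> b2 \<le> b3 \<and> b3 < a3
          \<and> \<not> (a2 = b2 \<and> b2 = b3))
       \<or> (a1 \<le> b1 \<and> b1 \<le> b2 \<and> b2 < a2 \<and> a2 \<le> a3 \<and> a3 \<le> b3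
          \<and> \<not> (a1 = b1 \<and> b1 = b2) \<and> \<not> (a2 = a3 \<and> a3 = b3))
       \<or> (a1 \<le> b1 \<and> b1 \<le> b2 \<and> b2 < a2 \<and> a2 < b3 \<and> b3 < a3
          \<and> \<not> (a1 = b1 \<and> b1 = b2))"
proof -
  have "a1 < b2 \<and> a2 < b3" using inside_nec[OF assms(7) assms(2,3,5,6)] .
  moreover have "b1 < a2 \<and> b2 < a3" using inside_nec[OF assms(8) assms(5,6,2,3)] .
  ultimately show ?thesis using assms by linarith
qed

end
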